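(* Let $X = [X_1 \; X_2] \in \mathbb{R}^{N\times P}$ with $X_1 \in \mathbb{R}^{N\times P_1}$, $X_2\in\mathbb{R}^{N\times P_2}$, $P = P_1+P_2$, and suppose the $N$-vector of ones $\mathbf{1}$ lies in the column span of $X_1$. Consider the hierarchical normal linear regression $$\mathbf{Y}\mid \boldsymbol\beta,\Phi \sim N(X_1\boldsymbol\beta_1 + X_2\boldsymbol\beta_2,\Phi),\quad \boldsymbol\beta_1\sim N(0,C),\quad \boldsymbol\beta_2\mid\Sigma\sim N(0,\Sigma),\quad \Sigma\sim f(\Sigma),\ \Phi\sim f(\Phi),$$ where $\Sigma\in\mathbb{R}^{P_2\times P_2}$ is positive definite and $\Phi\in\mathbb{R}^{N\times N}$ is diagonal and positive definite; in the Bayesian setting the prior densities $f(\Sigma)$, $f(\Phi)$ are such that the posterior is proper. Let $W$ be the $N\times N$ matrix of borrowing factors $$W = XVX'\Phi^{-1},\qquad V = \left(X'\Phi^{-1}X + \begin{bmatrix} C^{-1} & 0\\ 0 & \Sigma^{-1}\end{bmatrix}\right)^{-1},$$ where $C^{-1}$ is taken to be the $P_1\times P_1$ zero matrix. Then $\sum_{j=1}^N w_{ij} = 1$ for all $i=1,\dots,N$, i.e. $W\mathbf{1}=\mathbf{1}$.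
   Context: $w_{ij}$ denotes the $(i,j)$ entry of $W$ (the "borrowing factor" placed on $Y_j$ in the point estimate $\hat Y_i = (W\mathbf{Y})_i$). $W$ is defined for given values of $\Sigma$ and $\Phi$, and $V$ is assumed to exist (the displayed matrix is invertible). Setting $C^{-1}=0$ corresponds to giving the fixed effects $\boldsymbol\beta_1$ infinite prior variance. *)

theory Defs
  imports "HOL-Analysis.Analysis"
begin

definition hconcat :: "real^'p1^'n \<Rightarrow> real^'p2^'n \<Rightarrow> real^('p1 + 'p2)^'n" where
  "hconcat A B = (\<chi> i j. case j of Inl k \<Rightarrow> A $ i $ k | Inr k \<Rightarrow> B $ i $ k)"

definition blockdiag :: "real^'p1^'p1 \<Rightarrow> real^'p2^'p2 \<Rightarrow> real^('p1 + 'p2)^('p1 + 'p2)" where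
  "blockdiag A B = (\<chi> i j. case (i, j) of
      (Inl a, Inl b) \<Rightarrow> A $ a $ b
    | (Inr a, Inr b) \<Rightarrow> B $ a $ b
    | _ \<Rightarrow> 0)"

definition pos_def_mat :: "real^'n^'n \<Rightarrow> bool" where
  "pos_def_mat S \<longleftrightarrow> transpose S = S \<and> (\<forall>x. x \<noteq> 0 \<longrightarrow> x \<bullet> (S *v x) > 0)"

definition ones_vec :: "real^'n" where
  "ones_vec = (\<chi> i. 1)"

definition V_mat :: "real^'p1^'n \<Rightarrow> real^'p2^'n \<Rightarrow> real^'p2^'p2 \<Rightarrow> real^'n^'n
    \<Rightarrow> real^('p1 + 'p2)^('p1 + 'p2)" where
  "V_mat X1 X2 \<Sigma> \<Phi> = matrix_inv
     (transpose (hconcat X1 X2) ** matrix_inv \<Phi> ** hconcat X1 X2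
       + blockdiag (0 :: real^'p1^'p1) (matrix_inv \<Sigma>))"

definition W_mat :: "real^'p1^'n \<Rightarrow> real^'p2^'n \<Rightarrow> real^'p2^'p2 \<Rightarrow> real^'n^'n \<Rightarrow> real^'n^'n" where
  "W_mat X1 X2 \<Sigma> \<Phi> = hconcat X1 X2 ** V_mat X1 X2 \<Sigma> \<Phi> ** transpose (hconcat X1 X2) ** matrix_inv \<Phi>"

end

theory Submission
  imports Defs
begin

lemma minv_left:
  fixes A :: "real^'n^'n"
  assumes "invertible A"
  shows "matrix_inv A ** A = mat 1"
proof -
  have "\<exists>A'. A ** A' = mat 1 \<and> A' ** A = mat 1" using assms unfolding invertible_def by blast
  from someI_ex[OF this] show ?thesis unfolding matrix_inv_def by blast
qed

lemma sum_UNIV_plus: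
  fixes f :: "('a::finite + 'b::finite) \<Rightarrow> real"
  shows "sum f UNIV = sum (\<lambda>k. f (Inl k)) UNIV + sum (\<lambda>k. f (Inr k)) UNIV"
proof -
  have "sum f UNIV = sum f (range Inl) + sum f (range Inr)"
    by (subst UNIV_sum, rule sum.union_disjoint) auto
  also have "\<dots> = sum (\<lambda>k. f (Inl k)) UNIV + sum (\<lambda>k. f (Inr k)) UNIV"
    by (simp add: sum.reindex)
  finally show ?thesis .
qed

theorem theorem1:
  fixes X1 :: "real^'p1^'n" and X2 :: "real^'p2^'n"
    and \<Sigma> :: "real^'p2^'p2" and \<Phi> :: "real^'n^'n"
  assumes ones_span: "ones_vec \<in> span (columns X1)"
    and Sigma_pd: "pos_def_mat \<Sigma>"
    and Phi_diag: "\<forall>i j. i \<noteq> j \<longrightarrow> \<Phi> $ i $ j = 0"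
    and Phi_pd: "pos_def_mat \<Phi>"
    and V_exists: "invertible (transpose (hconcat X1 X2) ** matrix_inv \<Phi> ** hconcat X1 X2
                     + blockdiag (0 :: real^'p1^'p1) (matrix_inv \<Sigma>))"
  shows "W_mat X1 X2 \<Sigma> \<Phi> *v ones_vec = ones_vec"
proof -
  define X where "X = hconcat X1 X2"
  define Pi where "Pi = matrix_inv \<Phi>"
  define B where "B = blockdiag (0 :: real^'p1^'p1) (matrix_inv \<Sigma>)"
  define A where "A = transpose X ** Pi ** X + B"
  have lin: "linear ((*v) X1)" by simp
  have "ones_vec \<in> (*v) X1 ` span (range (\<lambda>i. axis i 1))"
    using ones_span unfolding columns_image_basis span_linear_image[OF lin] .
  then obtain a where a: "X1 *v a = ones_vec" by (metis imageE)
  define e :: "real^('p1+'p2)" where "e = (\<chi> j. case j of Inl k \<Rightarrow> a $ k | Inr k \<Rightarrow> 0)"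
  have Xe: "X *v e = ones_vec"
    unfolding X_def hconcat_def e_def matrix_vector_mult_def
    by (simp add: vec_eq_iff sum_UNIV_plus a[symmetric] matrix_vector_mult_def)
  have Be: "B *v e = 0"
    unfolding B_def blockdiag_def e_def matrix_vector_mult_def
    proof (simp add: vec_eq_iff sum_UNIV_plus, intro allI)
    fix i :: "'p1 + 'p2"
    show "(\<Sum>k\<in>UNIV. (case i of Inl a \<Rightarrow> case Inl k of Inl x \<Rightarrow> (0::real^'p1^'p1) $ a $ x | Inr bb \<Rightarrow> 0
             | Inr a \<Rightarrow> case Inl k of Inl aa \<Rightarrow> 0 | Inr x \<Rightarrow> matrix_inv \<Sigma> $ a $ x) * a $ k) = 0"
      by (cases i) simp_all
  qed
  have Ae: "A *v e = transpose X *v (Pi *v ones_vec)"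
    unfolding A_def by (simp add: matrix_vector_mult_add_rdistrib Be
        flip: matrix_vector_mul_assoc Xe)
  have VA: "matrix_inv A ** A = mat 1" using V_exists minv_left
    unfolding A_def X_def Pi_def B_def by blast
  have "W_mat X1 X2 \<Sigma> \<Phi> *v ones_vec = X *v (matrix_inv A *v (A *v e))"
    unfolding W_mat_def V_mat_def Ae
    by (simp add: X_def Pi_def A_def B_def matrix_vector_mul_assoc matrix_mul_assoc)
  also have "\<dots> = ones_vec" by (simp add: matrix_vector_mul_assoc VA Xe)
  finally show ?thesis .
qed

end
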